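(* Let $T_1,T_2$ be tables joined on column $J$ with frequencies $a_v,b_v$ ($v\in\mathcal U$). Fix UBS parameters $(p_1,q_1)$ with $0<p_1,q_1\le1$ for $T_1$, and fix an effective sampling rate $\epsilon_2\in(0,1]$ for $T_2$ with $\epsilon_2\le p_1$. Over all UBS parameters $(p_2,q_2)$ for $T_2$ with $p_2\in[\epsilon_2,1]$ and $q_2=\epsilon_2/p_2$, the variance of $\hat J_{\mathrm{count}}=\frac{1}{\min\{p_1,p_2\}q_1q_2}|S_1\bowtie_J S_2|$ (where $S_1=\mathrm{UBS}_{p_1,q_1}(T_1,J)$, $S_2=\mathrm{UBS}_{p_2,q_2}(T_2,J)$) is minimized when $p_2=p_1$ and $q_2=\epsilon_2/p_1$.
   Context: $T_1,T_2$ are finite multisets of tuples with a join attribute $J$ taking values in a finite set $\mathcal U$; $a_v$ (resp. $b_v$) is the number of tuples of $T_1$ (resp. $T_2$) with $J$-value $v$. $S_1\bowtie_J S_2$ is the set of pairs $(t_1,t_2)\in S_1\times S_2$ with $t_1.J=t_2.J$. $\mathrm{UBS}_{p,q}(T,J)$: given a hash function $h:\mathcal U\to[0,1]$, each tuple $t\in T$ with $h(t.J)<p$ is included independently with probability $q$; others are excluded. The values $h(v)$ are independent uniform on $[0,1]$, the same $h$ is used for both tables, and the Bernoulli coins are independent across all tuples and independent of $h$. The effective sampling rate of $\mathrm{UBS}_{p,q}$ is $pq$. *)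

theory Defs
  imports "HOL-Probability.Probability"
begin

text \<open>Tuples of T1 with join value v are indexed by (v,i), i < a v; likewise for T2 with b.\<close>
definition tuple_ids :: "'u set \<Rightarrow> ('u \<Rightarrow> nat) \<Rightarrow> ('u \<times> nat) set" where
  "tuple_ids U c = {(v, i). v \<in> U \<and> i < c v}"

text \<open>Joint probability space of the UBS experiment: independent uniform hash values h v on [0,1]
  (shared by both tables), independent Bernoulli(q1) coins for the tuples of T1 and
  independent Bernoulli(q2) coins for the tuples of T2, all mutually independent.\<close>
definition ubs_space ::
  "'u set \<Rightarrow> ('u \<Rightarrow> nat) \<Rightarrow> ('u \<Rightarrow> nat) \<Rightarrow> real \<Rightarrow> real \<Rightarrow>
   (('u \<Rightarrow> real) \<times> (('u \<times> nat) \<Rightarrow> bool) \<times> (('u \<times> nat) \<Rightarrow> bool)) measure" where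
  "ubs_space U a b q1 q2 =
     (PiM U (\<lambda>_. uniform_measure lborel {0..1::real})) \<Otimes>\<^sub>M
     ((PiM (tuple_ids U a) (\<lambda>_. measure_pmf (bernoulli_pmf q1))) \<Otimes>\<^sub>M
      (PiM (tuple_ids U b) (\<lambda>_. measure_pmf (bernoulli_pmf q2))))"

definition join_size ::
  "'u set \<Rightarrow> ('u \<Rightarrow> nat) \<Rightarrow> ('u \<Rightarrow> nat) \<Rightarrow> real \<Rightarrow> real \<Rightarrow>
   (('u \<Rightarrow> real) \<times> (('u \<times> nat) \<Rightarrow> bool) \<times> (('u \<times> nat) \<Rightarrow> bool)) \<Rightarrow> nat" where
  "join_size U a b p1 p2 \<omega> =
     (case \<omega> of (h, c1, c2) \<Rightarrow>
       card {(t1, t2). t1 \<in> tuple_ids U a \<and> t2 \<in> tuple_ids U b \<and> fst t1 = fst t2 \<and>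
                       h (fst t1) < p1 \<and> c1 t1 \<and> h (fst t2) < p2 \<and> c2 t2})"

definition J_count ::
  "'u set \<Rightarrow> ('u \<Rightarrow> nat) \<Rightarrow> ('u \<Rightarrow> nat) \<Rightarrow> real \<Rightarrow> real \<Rightarrow> real \<Rightarrow> real \<Rightarrow>
   (('u \<Rightarrow> real) \<times> (('u \<times> nat) \<Rightarrow> bool) \<times> (('u \<times> nat) \<Rightarrow> bool)) \<Rightarrow> real" where
  "J_count U a b p1 q1 p2 q2 \<omega> = real (join_size U a b p1 p2 \<omega>) / (min p1 p2 * q1 * q2)"

definition J_count_variance ::
  "'u set \<Rightarrow> ('u \<Rightarrow> nat) \<Rightarrow> ('u \<Rightarrow> nat) \<Rightarrow> real \<Rightarrow> real \<Rightarrow> real \<Rightarrow> real \<Rightarrow> real" where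
  "J_count_variance U a b p1 q1 p2 q2 =
     prob_space.variance (ubs_space U a b q1 q2) (J_count U a b p1 q1 p2 q2)"

end

theory Submission imports Defs begin

lemma unif_prob: "prob_space (uniform_measure lborel {0..1::real})"
  by (rule prob_space_uniform_measure) auto

lemma emeasure_unif_lt:
  assumes "0 \<le> m" "m \<le> 1"
  shows "emeasure (uniform_measure lborel {0..1::real}) {..<m} = ennreal m"
proof -
  have "{0..1} \<inter> {..<m} = {0..<m}" using assms by auto
  then show ?thesis using assms by (simp add: divide_ennreal_def)
qed

lemma emeasure_bern_True:
  assumes "0 \<le> q" "q \<le> 1"
  shows "emeasure (measure_pmf (bernoulli_pmf q)) {True} = ennreal q"
  using assms by (simp add: emeasure_pmf_single)

lemma PiE_meas:
  assumes "finite I" "\<And>i. i \<in> I \<Longrightarrow> A i \<in> sets N" "\<And>i. i \<in> I \<Longrightarrow> emeasure N (A i) = ennreal (f i)"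
    "\<And>i. i \<in> I \<Longrightarrow> 0 \<le> f i" "prob_space N"
  shows "emeasure (PiM I (\<lambda>_. N)) (PiE I A) = ennreal (prod f I)"
proof -
  interpret product_sigma_finite "\<lambda>_. N"
    unfolding product_sigma_finite_def using assms(5) prob_space_imp_sigma_finite by blast
  have "emeasure (PiM I (\<lambda>_. N)) (PiE I A) = (\<Prod>i\<in>I. emeasure N (A i))"
    using assms by (intro emeasure_PiM) auto
  also have "\<dots> = (\<Prod>i\<in>I. ennreal (f i))" using assms(3) by (simp cong: prod.cong)
  also have "\<dots> = ennreal (prod f I)" using assms(4) by (rule prod_ennreal)
  finally show ?thesis .
qed

lemma finite_tuple_ids: "finite U \<Longrightarrow> finite (tuple_ids U c)"
  by (rule finite_subset[of _ "Sigma U (\<lambda>v. {..<c v})"]) (auto simp: tuple_ids_def)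

lemma prod_if_card: "finite I \<Longrightarrow> S \<subseteq> I \<Longrightarrow> (\<Prod>i\<in>I. if i \<in> S then (c::real) else 1) = c ^ card S"
  by (simp add: prod.If_cases Int_absorb1 Int_absorb2)

lemma space_ubs: "space (ubs_space U a b q1 q2) =
  (PiE U (\<lambda>_. UNIV)) \<times> (PiE (tuple_ids U a) (\<lambda>_. UNIV) \<times> PiE (tuple_ids U b) (\<lambda>_. UNIV))"
  by (simp add: ubs_space_def space_pair_measure space_PiM)

lemma prob_space_ubs: "prob_space (ubs_space U a b q1 q2)"
  unfolding ubs_space_def
  by (intro prob_space_pair prob_space_PiM unif_prob prob_space_measure_pmf)

lemma measure_from_emeasure: "emeasure M A = ennreal r \<Longrightarrow> 0 \<le> r \<Longrightarrow> measure M A = r"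
  by (simp add: measure_def)

lemma box:
  fixes U :: "'u set"
  assumes U: "finite U" and HV: "HV \<subseteq> U" and S1: "S1 \<subseteq> tuple_ids U a" and S2: "S2 \<subseteq> tuple_ids U b"
    and m: "0 \<le> m" "m \<le> 1" and q: "0 \<le> q1" "q1 \<le> 1" "0 \<le> q2" "q2 \<le> 1"
  shows "{\<omega>\<in>space (ubs_space U a b q1 q2). (\<forall>v\<in>HV. fst \<omega> v < m) \<and> (\<forall>t\<in>S1. fst (snd \<omega>) t) \<and> (\<forall>t\<in>S2. snd (snd \<omega>) t)}
           \<in> sets (ubs_space U a b q1 q2) \<and>
         measure (ubs_space U a b q1 q2) {\<omega>\<in>space (ubs_space U a b q1 q2). (\<forall>v\<in>HV. fst \<omega> v < m) \<and> (\<forall>t\<in>S1. fst (snd \<omega>) t) \<and> (\<forall>t\<in>S2. snd (snd \<omega>) t)}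
           = m ^ card HV * q1 ^ card S1 * q2 ^ card S2"
proof -
  let ?UM = "uniform_measure lborel {0..1::real}"
  let ?P1 = "PiM U (\<lambda>_. ?UM)"
  let ?P2 = "PiM (tuple_ids U a) (\<lambda>_. measure_pmf (bernoulli_pmf q1))"
  let ?P3 = "PiM (tuple_ids U b) (\<lambda>_. measure_pmf (bernoulli_pmf q2))"
  let ?A = "PiE U (\<lambda>u. if u \<in> HV then {..<m} else UNIV)"
  let ?B = "PiE (tuple_ids U a) (\<lambda>t. if t \<in> S1 then {True} else UNIV)"
  let ?C = "PiE (tuple_ids U b) (\<lambda>t. if t \<in> S2 then {True} else UNIV)"
  have fa: "finite (tuple_ids U a)" and fb: "finite (tuple_ids U b)" using U by (auto intro: finite_tuple_ids)
  have eq: "{\<omega>\<in>space (ubs_space U a b q1 q2). (\<forall>v\<in>HV. fst \<omega> v < m) \<and> (\<forall>t\<in>S1. fst (snd \<omega>) t) \<and> (\<forall>t\<in>S2. snd (snd \<omega>) t)}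
     = ?A \<times> (?B \<times> ?C)"
    using HV S1 S2 by (auto simp: space_ubs PiE_iff split: if_splits)
  have sA: "?A \<in> sets ?P1" using U by (intro sets_PiM_I_finite) auto
  have sB: "?B \<in> sets ?P2" using fa by (intro sets_PiM_I_finite) auto
  have sC: "?C \<in> sets ?P3" using fb by (intro sets_PiM_I_finite) auto
  have eA: "emeasure ?P1 ?A = ennreal (\<Prod>u\<in>U. if u \<in> HV then m else 1)"
  proof (rule PiE_meas[OF U _ _ _ unif_prob])
    fix u assume "u \<in> U"
    show "(if u \<in> HV then {..<m} else UNIV) \<in> sets ?UM" by simp
    have "emeasure ?UM UNIV = 1"
      using prob_space.emeasure_space_1[OF unif_prob] by simp
    then show "emeasure ?UM (if u \<in> HV then {..<m} else UNIV) = ennreal (if u \<in> HV then m else 1)"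
      using emeasure_unif_lt[OF m] by (simp only: if_distrib split: if_split) simp
    show "0 \<le> (if u \<in> HV then m else 1)" using m by simp
  qed
  have eB: "emeasure ?P2 ?B = ennreal (\<Prod>t\<in>tuple_ids U a. if t \<in> S1 then q1 else 1)"
    using fa q by (intro PiE_meas prob_space_measure_pmf) (auto simp: emeasure_bern_True)
  have eC: "emeasure ?P3 ?C = ennreal (\<Prod>t\<in>tuple_ids U b. if t \<in> S2 then q2 else 1)"
    using fb q by (intro PiE_meas prob_space_measure_pmf) (auto simp: emeasure_bern_True)
  interpret p1: prob_space ?P1 by (intro prob_space_PiM unif_prob)
  interpret p2: prob_space ?P2 by (intro prob_space_PiM prob_space_measure_pmf)
  interpret p3: prob_space ?P3 by (intro prob_space_PiM prob_space_measure_pmf)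
  interpret p23: prob_space "?P2 \<Otimes>\<^sub>M ?P3" by (intro prob_space_pair p2.prob_space_axioms p3.prob_space_axioms)
  have "emeasure (ubs_space U a b q1 q2) (?A \<times> (?B \<times> ?C)) = emeasure ?P1 ?A * (emeasure ?P2 ?B * emeasure ?P3 ?C)"
    unfolding ubs_space_def
    using sA sB sC by (simp add: p23.emeasure_pair_measure_Times p3.emeasure_pair_measure_Times)
  also have "\<dots> = ennreal (m ^ card HV * q1 ^ card S1 * q2 ^ card S2)"
    using U fa fb HV S1 S2 m q
    apply (simp only: eA eB eC prod_if_card[OF U HV] prod_if_card[OF fa S1] prod_if_card[OF fb S2])
    using m q by (simp add: ennreal_mult[symmetric] mult.assoc)
  finally have em: "emeasure (ubs_space U a b q1 q2) (?A \<times> (?B \<times> ?C)) = ennreal (m ^ card HV * q1 ^ card S1 * q2 ^ card S2)" .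
  show ?thesis unfolding eq
  proof
    show "?A \<times> (?B \<times> ?C) \<in> sets (ubs_space U a b q1 q2)"
      unfolding ubs_space_def using sA sB sC by simp
    show "measure (ubs_space U a b q1 q2) (?A \<times> (?B \<times> ?C)) = m ^ card HV * q1 ^ card S1 * q2 ^ card S2"
      by (rule measure_from_emeasure[OF em]) (use m q in simp)
  qed
qed


definition pairs :: "'u set \<Rightarrow> ('u \<Rightarrow> nat) \<Rightarrow> ('u \<Rightarrow> nat) \<Rightarrow> (('u \<times> nat) \<times> ('u \<times> nat)) set" where
  "pairs U a b = {(t1, t2). t1 \<in> tuple_ids U a \<and> t2 \<in> tuple_ids U b \<and> fst t1 = fst t2}"

definition Ev where
  "Ev U a b q1 q2 m x = {\<omega>\<in>space (ubs_space U a b q1 q2).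
      fst \<omega> (fst (fst x)) < m \<and> fst (snd \<omega>) (fst x) \<and> snd (snd \<omega>) (snd x)}"

lemma finite_pairs: "finite U \<Longrightarrow> finite (pairs U a b)"
  by (rule finite_subset[of _ "tuple_ids U a \<times> tuple_ids U b"]) (auto simp: pairs_def finite_tuple_ids)

lemma Ev_int:
  assumes U: "finite U" and x: "x \<in> pairs U a b" and y: "y \<in> pairs U a b"
    and m: "0 \<le> m" "m \<le> 1" and q: "0 \<le> q1" "q1 \<le> 1" "0 \<le> q2" "q2 \<le> 1"
  shows "Ev U a b q1 q2 m x \<inter> Ev U a b q1 q2 m y \<in> sets (ubs_space U a b q1 q2) \<and>
    measure (ubs_space U a b q1 q2) (Ev U a b q1 q2 m x \<inter> Ev U a b q1 q2 m y) =
      m ^ card {fst (fst x), fst (fst y)} * q1 ^ card {fst x, fst y} * q2 ^ card {snd x, snd y}"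
proof -
  have eq: "Ev U a b q1 q2 m x \<inter> Ev U a b q1 q2 m y =
    {\<omega>\<in>space (ubs_space U a b q1 q2). (\<forall>v\<in>{fst (fst x), fst (fst y)}. fst \<omega> v < m) \<and>
       (\<forall>t\<in>{fst x, fst y}. fst (snd \<omega>) t) \<and> (\<forall>t\<in>{snd x, snd y}. snd (snd \<omega>) t)}"
    by (auto simp: Ev_def)
  show ?thesis unfolding eq
    using x y by (intro box U m q) (auto simp: pairs_def tuple_ids_def)
qed

lemma card_filter_sum: "finite A \<Longrightarrow> real (card {x\<in>A. P x}) = (\<Sum>x\<in>A. of_bool (P x))"
  by (simp add: of_bool_def sum.If_cases Int_def)

lemma J_count_eq:
  assumes "\<omega> \<in> space (ubs_space U a b q1 q2)" "finite U"
  shows "J_count U a b p1 q1 p2 q2 \<omega> =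
    (\<Sum>x\<in>pairs U a b. indicator (Ev U a b q1 q2 (min p1 p2) x) \<omega>) / (min p1 p2 * q1 * q2)"
proof -
  obtain h c1 c2 where w: "\<omega> = (h, c1, c2)" by (cases \<omega>) auto
  have "{(t1, t2). t1 \<in> tuple_ids U a \<and> t2 \<in> tuple_ids U b \<and> fst t1 = fst t2 \<and>
                       h (fst t1) < p1 \<and> c1 t1 \<and> h (fst t2) < p2 \<and> c2 t2}
     = {x \<in> pairs U a b. \<omega> \<in> Ev U a b q1 q2 (min p1 p2) x}"
    using assms(1) by (auto simp: w pairs_def Ev_def)
  then have "real (join_size U a b p1 p2 \<omega>) = (\<Sum>x\<in>pairs U a b. indicator (Ev U a b q1 q2 (min p1 p2) x) \<omega>)"
    unfolding join_size_def using w card_filter_sum[OF finite_pairs[OF assms(2)]]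
    by (simp add: indicator_def)
  then show ?thesis by (simp add: J_count_def)
qed


definition G :: "real \<Rightarrow> real \<Rightarrow> real \<Rightarrow> ('u \<times> nat) \<times> ('u \<times> nat) \<Rightarrow> ('u \<times> nat) \<times> ('u \<times> nat) \<Rightarrow> real" where
  "G m q1 q2 x y = m ^ card {fst (fst x), fst (fst y)} * q1 ^ card {fst x, fst y} * q2 ^ card {snd x, snd y}
     / (m * q1 * q2)^2"

lemma var_formula:
  fixes U :: "'u set"
  assumes U: "finite U" and m: "0 < min p1 p2" "min p1 p2 \<le> 1" and q: "0 < q1" "q1 \<le> 1" "0 < q2" "q2 \<le> 1"
  shows "J_count_variance U a b p1 q1 p2 q2 =
    (\<Sum>x\<in>pairs U a b. \<Sum>y\<in>pairs U a b. G (min p1 p2) q1 q2 x y) - (real (card (pairs U a b)))^2"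
proof -
  let ?M = "ubs_space U a b q1 q2"
  let ?m = "min p1 p2"
  let ?P = "pairs U a b"
  let ?E = "Ev U a b q1 q2 ?m"
  define D where "D = ?m * q1 * q2"
  have D: "D > 0" using m q by (simp add: D_def)
  interpret prob_space ?M by (rule prob_space_ubs)
  have fP: "finite ?P" using U by (rule finite_pairs)
  have EI: "\<And>x y. x \<in> ?P \<Longrightarrow> y \<in> ?P \<Longrightarrow> ?E x \<inter> ?E y \<in> sets ?M \<and>
    measure ?M (?E x \<inter> ?E y) = ?m ^ card {fst (fst x), fst (fst y)} * q1 ^ card {fst x, fst y} * q2 ^ card {snd x, snd y}"
    using m q by (intro Ev_int U) auto
  have E1: "?E x \<in> sets ?M \<and> measure ?M (?E x) = D" if "x \<in> ?P" for x
    using EI[OF that that] by (simp add: D_def)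
  define Z where "Z \<omega> = (\<Sum>x\<in>?P. indicator (?E x) \<omega>) / D" for \<omega>
  have YZ: "J_count U a b p1 q1 p2 q2 \<omega> = Z \<omega>" if "\<omega> \<in> space ?M" for \<omega>
    unfolding Z_def D_def using J_count_eq[OF that U] .
  have Z2: "(Z \<omega>)^2 = (\<Sum>x\<in>?P. \<Sum>y\<in>?P. indicator (?E x \<inter> ?E y) \<omega>) / D^2" for \<omega>
    unfolding Z_def by (simp add: power2_eq_square sum_product indicator_inter_arith)
  have intZ: "integrable ?M Z" unfolding Z_def
    using E1 by (intro integrable_divide integrable_sum integrable_indicator) (auto simp: emeasure_eq_measure)
  have intZ2: "integrable ?M (\<lambda>\<omega>. (Z \<omega>)^2)" unfolding Z2
    using EI by (intro integrable_divide integrable_sum integrable_indicator) (auto simp: emeasure_eq_measure)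
  have EZ: "expectation Z = real (card ?P)"
  proof -
    have "expectation Z = (\<Sum>x\<in>?P. measure ?M (?E x \<inter> space ?M)) / D"
    proof -
      have "expectation (\<lambda>\<omega>. \<Sum>x\<in>?P. indicator (?E x) \<omega>) = (\<Sum>x\<in>?P. expectation (indicator (?E x)) :: real)"
        using E1 by (intro Bochner_Integration.integral_sum integrable_indicator) (auto simp: emeasure_eq_measure)
      then show ?thesis unfolding Z_def by simp
    qed
    also have "\<dots> = (\<Sum>x\<in>?P. D) / D"
      using E1 sets.Int_space_eq2 by (intro arg_cong2[where f="(/)"] sum.cong) auto
    finally show ?thesis using D by simp
  qed
  have EZ2: "expectation (\<lambda>\<omega>. (Z \<omega>)^2) = (\<Sum>x\<in>?P. \<Sum>y\<in>?P. G ?m q1 q2 x y)"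
  proof -
    have "expectation (\<lambda>\<omega>. (Z \<omega>)^2) = (\<Sum>x\<in>?P. \<Sum>y\<in>?P. measure ?M (?E x \<inter> ?E y \<inter> space ?M)) / D^2"
    proof -
      have "expectation (\<lambda>\<omega>. \<Sum>x\<in>?P. \<Sum>y\<in>?P. indicator (?E x \<inter> ?E y) \<omega>) = (\<Sum>x\<in>?P. expectation (\<lambda>\<omega>. \<Sum>y\<in>?P. indicator (?E x \<inter> ?E y) \<omega>) :: real)"
        by (rule Bochner_Integration.integral_sum) (use EI in \<open>auto simp: emeasure_eq_measure intro!: integrable_sum\<close>)
      also have "\<dots> = (\<Sum>x\<in>?P. \<Sum>y\<in>?P. expectation (indicator (?E x \<inter> ?E y)))"
        by (intro sum.cong refl Bochner_Integration.integral_sum) (use EI in \<open>auto simp: emeasure_eq_measure\<close>)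
      finally show ?thesis unfolding Z2 by simp
    qed
    also have "\<dots> = (\<Sum>x\<in>?P. \<Sum>y\<in>?P. ?m ^ card {fst (fst x), fst (fst y)} * q1 ^ card {fst x, fst y} * q2 ^ card {snd x, snd y}) / D^2"
      using EI sets.Int_space_eq2 by (intro arg_cong2[where f="(/)"] sum.cong) auto
    finally show ?thesis by (simp add: G_def D_def sum_divide_distrib)
  qed
  have "J_count_variance U a b p1 q1 p2 q2 = variance Z"
    unfolding J_count_variance_def
  proof -
    have "expectation (J_count U a b p1 q1 p2 q2) = expectation Z"
      using YZ by (intro Bochner_Integration.integral_cong refl) auto
    then show "expectation (\<lambda>x. (J_count U a b p1 q1 p2 q2 x - expectation (J_count U a b p1 q1 p2 q2))\<^sup>2) =
      expectation (\<lambda>x. (Z x - expectation Z)\<^sup>2)"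
      using YZ by (intro Bochner_Integration.integral_cong refl) auto
  qed
  also have "\<dots> = expectation (\<lambda>\<omega>. (Z \<omega>)^2) - (expectation Z)^2"
    using intZ intZ2 by (rule variance_eq)
  finally show ?thesis using EZ EZ2 by simp
qed

lemma key_m:
  fixes p1 p2 e m :: real
  assumes "0 < e" "0 < p1" "0 < p2" "0 < m" "m \<le> p1" "m \<le> p2" "k \<in> {1,2::nat}" "l \<in> {1,2::nat}" "l = 1 \<longrightarrow> k = 1"
  shows "p1 ^ k * (e/p1) ^ l / (p1 * (e/p1))^2 \<le> m ^ k * (e/p2) ^ l / (m * (e/p2))^2"
proof -
  consider "k = 2" "l = 2" | "k = 1" "l = 2" | "k = 1" "l = 1" using assms(7-9) by auto
  then show ?thesis
  proof cases
    case 1 then show ?thesis using assms by (simp add: power2_eq_square field_simps)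
  next
    case 2 then show ?thesis using assms by (simp add: power2_eq_square field_simps)
  next
    case 3 then show ?thesis using assms by (simp add: power2_eq_square field_simps)
  qed
qed

lemma card_2: "card {x, y} \<in> {1, 2::nat}"
  by (cases "x = y") auto

lemma G_split:
  assumes "m \<noteq> 0" "q1 \<noteq> 0" "r \<noteq> 0"
  shows "G m q1 r x y = (q1 ^ card {fst x, fst y} / q1^2) *
     (m ^ card {fst (fst x), fst (fst y)} * r ^ card {snd x, snd y} / (m * r)^2)"
  using assms by (simp add: G_def power_mult_distrib field_simps)

lemma G_le:
  assumes x: "x \<in> pairs U a b" and y: "y \<in> pairs U a b"
    and e: "0 < e" "e \<le> p1" "e \<le> p2" and q1: "0 < q1"
  shows "G p1 q1 (e/p1) x y \<le> G (min p1 p2) q1 (e/p2) x y"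
proof -
  have p: "0 < p1" "0 < p2" "0 < min p1 p2" using e by auto
  have kl: "card {snd x, snd y} = 1 \<longrightarrow> card {fst (fst x), fst (fst y)} = 1"
  proof
    assume "card {snd x, snd y} = 1"
    then have "snd x = snd y" by (cases "snd x = snd y") auto
    then show "card {fst (fst x), fst (fst y)} = 1" using x y by (auto simp: pairs_def)
  qed
  have "p1 ^ card {fst (fst x), fst (fst y)} * (e/p1) ^ card {snd x, snd y} / (p1 * (e/p1))^2
     \<le> (min p1 p2) ^ card {fst (fst x), fst (fst y)} * (e/p2) ^ card {snd x, snd y} / (min p1 p2 * (e/p2))^2"
    using p e kl card_2[of "fst (fst x)" "fst (fst y)"] card_2[of "snd x" "snd y"] by (intro key_m) auto
  then show ?thesis using p e q1
    by (subst G_split, simp, simp, simp, subst G_split, simp, simp, simp) (intro mult_left_mono, auto)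
qed

theorem lemma2:
  fixes U :: "'u set" and a b :: "'u \<Rightarrow> nat" and p1 q1 \<epsilon>2 :: real
  assumes "finite U"
    and "0 < p1" "p1 \<le> 1" "0 < q1" "q1 \<le> 1"
    and "0 < \<epsilon>2" "\<epsilon>2 \<le> 1" "\<epsilon>2 \<le> p1"
  shows "\<forall>p2 \<in> {\<epsilon>2..1}.
           J_count_variance U a b p1 q1 p1 (\<epsilon>2 / p1) \<le> J_count_variance U a b p1 q1 p2 (\<epsilon>2 / p2)"
proof
  fix p2 assume p2: "p2 \<in> {\<epsilon>2..1}"
  have A: "J_count_variance U a b p1 q1 p1 (\<epsilon>2 / p1) =
    (\<Sum>x\<in>pairs U a b. \<Sum>y\<in>pairs U a b. G (min p1 p1) q1 (\<epsilon>2 / p1) x y) - (real (card (pairs U a b)))^2"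
    using assms by (intro var_formula) auto
  have B: "J_count_variance U a b p1 q1 p2 (\<epsilon>2 / p2) =
    (\<Sum>x\<in>pairs U a b. \<Sum>y\<in>pairs U a b. G (min p1 p2) q1 (\<epsilon>2 / p2) x y) - (real (card (pairs U a b)))^2"
    using assms p2 by (intro var_formula) auto
  have "(\<Sum>x\<in>pairs U a b. \<Sum>y\<in>pairs U a b. G p1 q1 (\<epsilon>2 / p1) x y)
      \<le> (\<Sum>x\<in>pairs U a b. \<Sum>y\<in>pairs U a b. G (min p1 p2) q1 (\<epsilon>2 / p2) x y)"
    using assms p2 by (intro sum_mono G_le) auto
  then show "J_count_variance U a b p1 q1 p1 (\<epsilon>2 / p1) \<le> J_count_variance U a b p1 q1 p2 (\<epsilon>2 / p2)"
    unfolding A B by simp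
qed

end
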